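(* Let $k$ and $d$ be positive integers. Let $G$ be a simple undirected graph and let $v$ be a vertex of $G$ that has at least $R(k+2,d)$ neighbours which are pairwise non-adjacent in $G$. Suppose $G$ can be represented as the intersection graph of an arrangement $\mathcal{R}$ of axis-aligned hypercubes in $\mathbb{R}^d$, with $f\colon V(G)\to\mathcal{R}$ the corresponding bijection (so that for distinct vertices $u,u'$, $uu'\in E(G)$ if and only if $f(u)\cap f(u')\neq\emptyset$). Then there is a neighbour $w$ of $v$ such that the hypercube $f(w)$ is more than $k$ times smaller than $f(v)$, i.e. $k\cdot s(f(w)) < s(f(v))$, where $s(\cdot)$ denotes the side length of a hypercube.
   Context: $R(k,d)$ denotes the Ramsey number: the smallest integer $N$ such that every colouring of the edges of the complete graph on $N$ vertices with $d$ colours contains a monochromatic clique on $k$ vertices. An axis-aligned hypercube in $\mathbb{R}^d$ is a set of the form $\prod_{c=1}^d [p_c, p_c+s]$ with $s>0$. *)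

theory Defs
  imports "HOL-Analysis.Analysis"
begin

definition ramsey_number :: "nat \<Rightarrow> nat \<Rightarrow> nat" where
  "ramsey_number k d = (LEAST N. \<forall>c :: nat set \<Rightarrow> nat.
      (\<forall>i<N. \<forall>j<N. i \<noteq> j \<longrightarrow> c {i, j} < d) \<longrightarrow>
      (\<exists>S \<subseteq> {..<N}. card S = k \<and>
         (\<exists>col. \<forall>i\<in>S. \<forall>j\<in>S. i \<noteq> j \<longrightarrow> c {i, j} = col)))"

definition axis_hypercube :: "real ^ 'n \<Rightarrow> real \<Rightarrow> (real ^ 'n) set" where
  "axis_hypercube p s = {x. \<forall>c. p $ c \<le> x $ c \<and> x $ c \<le> p $ c + s}"

end

theory Submission imports Defs "HOL-Library.Ramsey" begin

lemma ramsey_number_prop: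
  "\<forall>c :: nat set \<Rightarrow> nat.
      (\<forall>i<ramsey_number k d. \<forall>j<ramsey_number k d. i \<noteq> j \<longrightarrow> c {i, j} < d) \<longrightarrow>
      (\<exists>S \<subseteq> {..<ramsey_number k d}. card S = k \<and>
         (\<exists>col. \<forall>i\<in>S. \<forall>j\<in>S. i \<noteq> j \<longrightarrow> c {i, j} = col))"
  unfolding ramsey_number_def
proof (rule LeastI_ex)
  obtain N0 :: nat where N0: "partn_lst {..<N0} (replicate d k) 2"
    using ramsey_full by blast
  show "\<exists>N. \<forall>c :: nat set \<Rightarrow> nat.
      (\<forall>i<N. \<forall>j<N. i \<noteq> j \<longrightarrow> c {i, j} < d) \<longrightarrow>
      (\<exists>S \<subseteq> {..<N}. card S = k \<and>
         (\<exists>col. \<forall>i\<in>S. \<forall>j\<in>S. i \<noteq> j \<longrightarrow> c {i, j} = col))"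
  proof (rule exI[of _ N0], intro allI impI)
    fix c :: "nat set \<Rightarrow> nat"
    assume hc: "\<forall>i<N0. \<forall>j<N0. i \<noteq> j \<longrightarrow> c {i, j} < d"
    have "c \<in> nsets {..<N0} 2 \<rightarrow> {..<d}"
    proof (rule Pi_I)
      fix X assume "X \<in> nsets {..<N0} 2"
      then obtain x y where "X = {x,y}" "x \<in> {..<N0}" "y \<in> {..<N0}" "x \<noteq> y"
        by (rule nsets2_E)
      then show "c X \<in> {..<d}" using hc by auto
    qed
    then obtain i H where i: "i < length (replicate d k)" "H \<in> nsets {..<N0} (replicate d k ! i)"
        "c ` (nsets H 2) \<subseteq> {i}"
      using partn_lstE[OF N0] by (metis length_replicate)
    have H: "H \<subseteq> {..<N0}" "card H = k" using i by (auto simp: nsets_def)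
    have "\<forall>x\<in>H. \<forall>y\<in>H. x \<noteq> y \<longrightarrow> c {x, y} = i"
    proof (intro ballI impI)
      fix x y assume "x \<in> H" "y \<in> H" "x \<noteq> y"
      then have "{x,y} \<in> nsets H 2" by simp
      then show "c {x,y} = i" using i(3) by blast
    qed
    then show "\<exists>S \<subseteq> {..<N0}. card S = k \<and>
         (\<exists>col. \<forall>i\<in>S. \<forall>j\<in>S. i \<noteq> j \<longrightarrow> c {i, j} = col)"
      using H by blast
  qed
qed

lemma cube_disjoint_sep:
  fixes p q :: "real ^ 'n"
  assumes "axis_hypercube p s \<inter> axis_hypercube q t = {}" "s \<ge> 0" "t \<ge> 0"
  shows "\<exists>c. p$c + s < q$c \<or> q$c + t < p$c"
proof (rule ccontr)
  assume "\<not> ?thesis"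
  then have h: "\<forall>c. q$c \<le> p$c + s \<and> p$c \<le> q$c + t" by (simp add: not_less)
  define x :: "real ^ 'n" where "x = (\<chi> c. max (p$c) (q$c))"
  have "x \<in> axis_hypercube p s \<inter> axis_hypercube q t"
    using h assms(2,3) by (auto simp: axis_hypercube_def x_def)
  then show False using assms(1) by blast
qed

lemma cube_meet:
  fixes p q :: "real ^ 'n"
  assumes "axis_hypercube p s \<inter> axis_hypercube q t \<noteq> {}"
  shows "q$c \<le> p$c + s \<and> p$c \<le> q$c + t"
proof -
  obtain x where "x \<in> axis_hypercube p s" "x \<in> axis_hypercube q t" using assms by blast
  then show ?thesis unfolding axis_hypercube_def
    by (smt (verit, best) mem_Collect_eq)
qed

lemma intervals_sum_strict:
  fixes a l :: "'b \<Rightarrow> real"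
  assumes "finite T" "T \<noteq> {}"
    and "\<forall>t\<in>T. A \<le> a t \<and> a t + l t < B" "\<forall>t\<in>T. 0 \<le> l t"
    and "\<forall>t\<in>T. \<forall>t'\<in>T. t \<noteq> t' \<longrightarrow> a t + l t < a t' \<or> a t' + l t' < a t"
  shows "(\<Sum>t\<in>T. l t) < B - A"
  using assms
proof (induction "card T" arbitrary: T B rule: less_induct)
  case less
  have "Max (a ` T) \<in> a ` T" using less.prems(1,2) by (intro Max_in) auto
  then obtain t0 where t0: "t0 \<in> T" "a t0 = Max (a ` T)" by (metis imageE)
  have amax: "\<forall>t\<in>T. a t \<le> a t0" using t0 less.prems(1) by simp
  define R where "R = T - {t0}"
  have sumT: "(\<Sum>t\<in>T. l t) = l t0 + (\<Sum>t\<in>R. l t)"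
    unfolding R_def using less.prems(1) t0(1) by (simp add: sum.remove)
  have l0: "l t0 < B - a t0" using less.prems(3) t0(1) by auto
  show ?case
  proof (cases "R = {}")
    case True
    then show ?thesis using sumT l0 less.prems(3) t0(1) by auto
  next
    case False
    have Rright: "\<forall>t\<in>R. A \<le> a t \<and> a t + l t < a t0"
    proof
      fix t assume "t \<in> R"
      then have "t \<in> T" "t \<noteq> t0" by (auto simp: R_def)
      then show "A \<le> a t \<and> a t + l t < a t0"
        using less.prems(3,4,5) amax t0(1) by fastforce
    qed
    have "card R < card T" unfolding R_def using less.prems(1) t0(1)
      by (metis card_Diff1_less)
    then have "(\<Sum>t\<in>R. l t) < a t0 - A"
      using less.hyps[of R "a t0"] False Rright less.prems(1,4,5) by (auto simp: R_def)
    then show ?thesis using sumT l0 by linarith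
  qed
qed


lemma intervals_contra:
  fixes a l :: "'b \<Rightarrow> real"
  assumes fin: "finite W" and cW: "card W = k + 2" and k: "k \<ge> 1"
    and meet: "\<forall>t\<in>W. a t \<le> A + L \<and> A \<le> a t + l t"
    and sz: "\<forall>t\<in>W. 0 < l t \<and> L \<le> real k * l t"
    and sep: "\<forall>t\<in>W. \<forall>t'\<in>W. t \<noteq> t' \<longrightarrow> a t + l t < a t' \<or> a t' + l t' < a t"
  shows False
proof -
  have Wne: "W \<noteq> {}" using cW by auto
  have "Min (a ` W) \<in> a ` W" using fin Wne by (intro Min_in) auto
  then obtain tmin where tmin: "tmin \<in> W" "a tmin = Min (a ` W)" by (metis imageE)
  have "Max (a ` W) \<in> a ` W" using fin Wne by (intro Max_in) auto
  then obtain tmax where tmax: "tmax \<in> W" "a tmax = Max (a ` W)" by (metis imageE)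
  have amin: "\<forall>t\<in>W. a tmin \<le> a t" using tmin fin by simp
  have amax: "\<forall>t\<in>W. a t \<le> a tmax" using tmax fin by simp
  define M where "M = W - {tmin, tmax}"
  have cM: "card M \<ge> k" unfolding M_def using fin cW tmin(1) tmax(1)
  proof -
    have "card (W - {tmin, tmax}) \<ge> card W - card {tmin, tmax}"
      by (rule diff_card_le_card_Diff) simp
    moreover have "card {tmin, tmax} \<le> 2" by (simp add: card_insert_if)
    ultimately show "card (W - {tmin, tmax}) \<ge> k" using cW by linarith
  qed
  have finM: "finite M" using fin by (simp add: M_def)
  have Mne: "M \<noteq> {}" using cM k finM by auto
  have inM: "\<forall>t\<in>M. A \<le> a t \<and> a t + l t < A + L"
  proof
    fix t assume tM: "t \<in> M"
    then have t: "t \<in> W" "t \<noteq> tmin" "t \<noteq> tmax" by (auto simp: M_def)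
    have "a tmin + l tmin < a t"
      using sep t tmin(1) amin sz by fastforce
    moreover have "a t + l t < a tmax"
      using sep t tmax(1) amax sz by fastforce
    ultimately show "A \<le> a t \<and> a t + l t < A + L"
      using meet tmin(1) tmax(1) by fastforce
  qed
  have "(\<Sum>t\<in>M. l t) < (A + L) - A"
    by (rule intervals_sum_strict[OF finM Mne inM]) (use sz sep in \<open>auto simp: M_def\<close>)
  then have lt: "(\<Sum>t\<in>M. l t) < L" by simp
  have "(\<Sum>t\<in>M. L) \<le> (\<Sum>t\<in>M. real k * l t)"
    by (rule sum_mono) (use sz in \<open>auto simp: M_def\<close>)
  then have "real (card M) * L \<le> real k * (\<Sum>t\<in>M. l t)"
    by (simp add: sum_distrib_left)
  moreover have "L > 0" using sz Wne k
    by (metis all_not_in_conv lt sum_nonneg order.strict_trans1 less_le_not_le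
        sz[rule_format] M_def Diff_subset subsetD)
  ultimately have "real k * L \<le> real k * (\<Sum>t\<in>M. l t)"
    using cM by (smt (verit) mult_right_mono of_nat_mono)
  then have "L \<le> (\<Sum>t\<in>M. l t)" using k by simp
  then show False using lt by simp
qed

theorem lemma5:
  fixes V :: "'a set" and E :: "'a \<Rightarrow> 'a \<Rightarrow> bool"
    and p :: "'a \<Rightarrow> real ^ 'd" and s :: "'a \<Rightarrow> real"
    and f :: "'a \<Rightarrow> (real ^ 'd) set"
    and k :: nat and v :: 'a
  assumes k_pos: "k \<ge> 1"
    and E_sym: "\<And>u u'. E u u' \<Longrightarrow> E u' u"
    and E_irrefl: "\<And>u. \<not> E u u"
    and E_sub: "\<And>u u'. E u u' \<Longrightarrow> u \<in> V \<and> u' \<in> V"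
    and cubes: "\<And>u. u \<in> V \<Longrightarrow> s u > 0 \<and> f u = axis_hypercube (p u) (s u)"
    and f_inj: "inj_on f V"
    and intersect: "\<And>u u'. u \<in> V \<Longrightarrow> u' \<in> V \<Longrightarrow> u \<noteq> u' \<Longrightarrow>
                      (E u u' \<longleftrightarrow> f u \<inter> f u' \<noteq> {})"
    and v_in: "v \<in> V"
    and indep_nbrs: "\<exists>I. finite I \<and> I \<subseteq> {u. E v u} \<and>
                      card I \<ge> ramsey_number (k + 2) CARD('d) \<and>
                      (\<forall>u\<in>I. \<forall>u'\<in>I. \<not> E u u')"
  shows "\<exists>w. E v w \<and> real k * s w < s v"
proof (rule ccontr)
  assume neg: "\<not> ?thesis"
  then have big: "\<And>w. E v w \<Longrightarrow> s v \<le> real k * s w" by force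
  define d where "d = CARD('d)"
  define N where "N = ramsey_number (k+2) d"
  obtain I where I: "finite I" "I \<subseteq> {u. E v u}" "N \<le> card I" "\<forall>u\<in>I. \<forall>u'\<in>I. \<not> E u u'"
    using indep_nbrs by (auto simp: N_def d_def)
  obtain J where J: "J \<subseteq> I" "card J = N" "finite J"
    using obtain_subset_with_card_n[OF I(3)] by blast
  obtain g where g: "bij_betw g {0..<N} J"
    using ex_bij_betw_nat_finite[OF J(3)] J(2) by auto
  obtain e :: "nat \<Rightarrow> 'd" where e: "bij_betw e {0..<d} UNIV"
    using ex_bij_betw_nat_finite[of "UNIV :: 'd set"] by (auto simp: d_def)
  define sep where "sep c a b \<longleftrightarrow> (p a $ c + s a < p b $ c \<or> p b $ c + s b < p a $ c)" for c a b
  have inV: "\<And>u. u \<in> J \<Longrightarrow> u \<in> V \<and> E v u" using J(1) I(2) E_sub by blast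
  have sepJ: "\<exists>c. sep c u u'" if "u \<in> J" "u' \<in> J" "u \<noteq> u'" for u u'
  proof -
    have "\<not> E u u'" using I(4) J(1) that by blast
    then have "f u \<inter> f u' = {}" using intersect inV that by blast
    then have "axis_hypercube (p u) (s u) \<inter> axis_hypercube (p u') (s u') = {}"
      using cubes inV that by auto
    then show ?thesis unfolding sep_def
      using cube_disjoint_sep cubes inV that by (metis less_le)
  qed
  define col where "col S = (LEAST m. \<forall>i\<in>S. \<forall>j\<in>S. i \<noteq> j \<longrightarrow> sep (e m) (g i) (g j))" for S
  have colP: "col {i,j} < d \<and> (\<forall>i'\<in>{i,j}. \<forall>j'\<in>{i,j}. i' \<noteq> j' \<longrightarrow> sep (e (col {i,j})) (g i') (g j'))"
    if "i < N" "j < N" "i \<noteq> j" for i j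
  proof -
    have gij: "g i \<in> J" "g j \<in> J" "g i \<noteq> g j"
      using g that by (auto simp: bij_betw_def inj_on_def)
    obtain c where c: "sep c (g i) (g j)" using sepJ gij by blast
    obtain m where m: "m < d" "e m = c" using e by (metis atLeastLessThan_iff bij_betw_iff_bijections UNIV_I)
    have P: "\<forall>i'\<in>{i,j}. \<forall>j'\<in>{i,j}. i' \<noteq> j' \<longrightarrow> sep (e m) (g i') (g j')"
      using c m(2) by (auto simp: sep_def)
    show ?thesis
      unfolding col_def
      using LeastI[of "\<lambda>m. \<forall>i'\<in>{i,j}. \<forall>j'\<in>{i,j}. i' \<noteq> j' \<longrightarrow> sep (e m) (g i') (g j')" m, OF P]
        Least_le[of "\<lambda>m. \<forall>i'\<in>{i,j}. \<forall>j'\<in>{i,j}. i' \<noteq> j' \<longrightarrow> sep (e m) (g i') (g j')" m, OF P] m(1)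
      by auto
  qed
  have "\<exists>S \<subseteq> {..<N}. card S = k + 2 \<and> (\<exists>col0. \<forall>i\<in>S. \<forall>j\<in>S. i \<noteq> j \<longrightarrow> col {i, j} = col0)"
    using ramsey_number_prop[of "k+2" d, rule_format, of col] colP by (auto simp: N_def)
  then obtain S col0 where S: "S \<subseteq> {..<N}" "card S = k + 2"
    and Sc: "\<forall>i\<in>S. \<forall>j\<in>S. i \<noteq> j \<longrightarrow> col {i, j} = col0" by blast
  define c0 where "c0 = e col0"
  have sepS: "sep c0 (g i) (g j)" if "i \<in> S" "j \<in> S" "i \<noteq> j" for i j
    using colP[of i j] Sc S(1) that by (auto simp: c0_def)
  define W where "W = g ` S"
  have injS: "inj_on g S" using g S(1) inj_on_subset[of g "{0..<N}" S]
    by (auto simp: bij_betw_def lessThan_atLeast0)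
  have cW: "card W = k + 2" using card_image[OF injS] S(2) by (simp add: W_def)
  have WJ: "W \<subseteq> J" using g S(1) by (auto simp: W_def bij_betw_def)
  have finW: "finite W" using J(3) WJ finite_subset by blast
  have sepW: "\<forall>t\<in>W. \<forall>t'\<in>W. t \<noteq> t' \<longrightarrow> sep c0 t t'"
    using sepS by (auto simp: W_def)
  have meetW: "\<forall>t\<in>W. p t $ c0 \<le> p v $ c0 + s v \<and> p v $ c0 \<le> p t $ c0 + s t"
  proof
    fix t assume "t \<in> W"
    then have t: "t \<in> V" "E v t" using inV WJ by auto
    then have "v \<noteq> t" using E_irrefl by blast
    then have "f v \<inter> f t \<noteq> {}" using intersect v_in t by blast
    then have "axis_hypercube (p v) (s v) \<inter> axis_hypercube (p t) (s t) \<noteq> {}"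
      using cubes v_in t by auto
    then show "p t $ c0 \<le> p v $ c0 + s v \<and> p v $ c0 \<le> p t $ c0 + s t"
      by (rule cube_meet)
  qed
  have szW: "\<forall>t\<in>W. 0 < s t \<and> s v \<le> real k * s t"
    using inV WJ cubes big by blast
  show False
    by (rule intervals_contra[OF finW cW k_pos, of "\<lambda>t. p t $ c0" "p v $ c0" "s v" s])
       (use meetW szW sepW in \<open>auto simp: sep_def\<close>)
qed

end
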